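(* Let $n,m$ be positive integers. The expected number of fixed points of a permutation drawn from the lazy $m$-shelf shuffling distribution $x_m$ on $S_n$ equals $1+2\sum_{k=1}^{(n-1)/2}\frac{1}{(2m+1)^{2k}}$ if $n$ is odd, and $1+2\sum_{k=1}^{n/2-1}\frac{1}{(2m+1)^{2k}}+\frac{1}{(2m+1)^n}$ if $n$ is even.
   Context: $x_m$ is the lazy $m$-shelf shuffling distribution on $S_n$: a deck of cards $1,\ldots,n$ (top to bottom) is processed in order $1,\ldots,n$; each card independently and uniformly chooses one of $2m+1$ options: shelf $0$ (placed below the cards already there), or one of shelves $1,\ldots,m$, placed either on top of or below the cards already there. The piles are then stacked with shelf $0$ on top, then shelf $1$, ..., shelf $m$; $x_m(\pi)$ is the probability that the card in position $i$ from the top is $\pi(i)$ for all $i$. A fixed point of $\pi$ is an $i$ with $\pi(i)=i$. *)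

theory Defs
  imports "HOL-Analysis.Analysis"
begin

text \<open>Options for a card: 0 = shelf 0 (placed below); 2j-1 = shelf j, placed on top;
  2j = shelf j, placed below (1 \<le> j \<le> m). So there are 2m+1 options {0..<2m+1}.\<close>

definition shelf_of :: "nat \<Rightarrow> nat" where
  "shelf_of x = (x + 1) div 2"

definition place :: "(nat \<Rightarrow> nat) \<Rightarrow> nat \<Rightarrow> (nat \<Rightarrow> nat list) \<Rightarrow> (nat \<Rightarrow> nat list)" where
  "place c i piles =
     piles(shelf_of (c i) := (if odd (c i) then i # piles (shelf_of (c i))
                              else piles (shelf_of (c i)) @ [i]))"

definition shelf_deck :: "nat \<Rightarrow> nat \<Rightarrow> (nat \<Rightarrow> nat) \<Rightarrow> nat list" where
  "shelf_deck m n c =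
     (let piles = fold (place c) [1..<Suc n] (\<lambda>_. []) in concat (map piles [0..<Suc m]))"

definition shelf_choices :: "nat \<Rightarrow> nat \<Rightarrow> (nat \<Rightarrow> nat) set" where
  "shelf_choices m n = PiE {1..n} (\<lambda>_. {..<2*m+1})"

definition lazy_shelf :: "nat \<Rightarrow> nat \<Rightarrow> (nat \<Rightarrow> nat) \<Rightarrow> real" where
  "lazy_shelf m n \<pi> =
     real (card {c \<in> shelf_choices m n. shelf_deck m n c = map \<pi> [1..<Suc n]})
     / real (2*m+1) ^ n"

definition fixed_points :: "nat \<Rightarrow> (nat \<Rightarrow> nat) \<Rightarrow> nat" where
  "fixed_points n \<pi> = card {i \<in> {1..n}. \<pi> i = i}"

end

theory Submission
  imports Defs "HOL-Computational_Algebra.Polynomial"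
begin

definition key :: "nat \<Rightarrow> (nat \<Rightarrow> nat) \<Rightarrow> nat \<Rightarrow> nat" where
  "key n c j = (n+1) * c j + (if odd (c j) then n - j else j)"

lemma key_less:
  assumes "j \<le> n" "i \<le> n"
  shows "key n c j < key n c i \<longleftrightarrow> (c j < c i \<or> (c j = c i \<and> (if odd (c i) then i < j else j < i)))"
proof -
  have rj: "(if odd (c j) then n - j else j) < n+1" and ri: "(if odd (c i) then n - i else i) < n+1"
    using assms by auto
  show ?thesis
  proof (cases "c j < c i")
    case True
    then have "(n+1) * c j + (n+1) \<le> (n+1) * c i"
      by (metis add.commute mult_Suc_right mult_le_mono2 Suc_leI)
    then show ?thesis using True rj unfolding key_def by linarith
  next
    case False
    show ?thesis
    proof (cases "c j = c i")
      case True
      then show ?thesis using assms unfolding key_def by auto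
    next
      case False2: False
      then have "c i < c j" using False by linarith
      then have "(n+1) * c i + (n+1) \<le> (n+1) * c j"
        by (metis add.commute mult_Suc_right mult_le_mono2 Suc_leI)
      then show ?thesis using False False2 ri unfolding key_def by auto
    qed
  qed
qed

definition piles :: "(nat \<Rightarrow> nat) \<Rightarrow> nat \<Rightarrow> nat \<Rightarrow> nat list" where
  "piles c k = fold (place c) [1..<Suc k] (\<lambda>_. [])"

lemma piles_Suc: "piles c (Suc k) = place c (Suc k) (piles c k)"
  unfolding piles_def by simp

lemma shelf_same_odd: "shelf_of x = shelf_of y \<Longrightarrow> odd y \<Longrightarrow> x \<noteq> y \<Longrightarrow> y < x"
  unfolding shelf_of_def by presburger

lemma shelf_same_even: "shelf_of x = shelf_of y \<Longrightarrow> even y \<Longrightarrow> x \<noteq> y \<Longrightarrow> x < y"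
  unfolding shelf_of_def by presburger

lemma shelf_less: "shelf_of x < shelf_of y \<Longrightarrow> x < y"
  unfolding shelf_of_def by (metis add_le_mono1 div_le_mono not_le)

lemma set_Suc_shelf: "{j\<in>{1..Suc k}. shelf_of (c j) = s} =
  (if shelf_of (c (Suc k)) = s then insert (Suc k) {j\<in>{1..k}. shelf_of (c j) = s}
   else {j\<in>{1..k}. shelf_of (c j) = s})"
  by (auto simp: atLeastAtMostSuc_conv)

lemma piles_inv:
  "k \<le> n \<Longrightarrow> set (piles c k s) = {j\<in>{1..k}. shelf_of (c j) = s} \<and>
     sorted_wrt (\<lambda>a b. key n c a < key n c b) (piles c k s)"
proof (induction k arbitrary: s)
  case 0
  then show ?case by (simp add: piles_def)
next
  case (Suc k)
  have IH: "\<And>s. set (piles c k s) = {j\<in>{1..k}. shelf_of (c j) = s} \<and>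
     sorted_wrt (\<lambda>a b. key n c a < key n c b) (piles c k s)" using Suc by simp
  show ?case
  proof (cases "s = shelf_of (c (Suc k))")
    case False
    then have "piles c (Suc k) s = piles c k s" unfolding piles_Suc place_def by simp
    then show ?thesis using IH[of s] False set_Suc_shelf[of k c s] by simp
  next
    case True
    note s = True
    show ?thesis
    proof (cases "odd (c (Suc k))")
      case True
      have pe: "piles c (Suc k) s = Suc k # piles c k s" unfolding piles_Suc place_def using s True by simp
      have "key n c (Suc k) < key n c b" if "b \<in> set (piles c k s)" for b
      proof -
        have b: "b \<le> k" "1 \<le> b" "shelf_of (c b) = s" using that IH[of s] by auto
        have "c (Suc k) < c b \<or> (c b = c (Suc k))"
          using shelf_same_odd[of "c b" "c (Suc k)"] b s True by auto
        moreover have "b \<le> n" "Suc k \<le> n" using b Suc.prems by linarith+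
        ultimately show ?thesis using True b(1) by (subst key_less) (auto simp del: One_nat_def)
      qed
      then show ?thesis using IH[of s] s pe set_Suc_shelf[of k c s] by simp
    next
      case False
      have pe: "piles c (Suc k) s = piles c k s @ [Suc k]" unfolding piles_Suc place_def using s False by simp
      have "key n c b < key n c (Suc k)" if "b \<in> set (piles c k s)" for b
      proof -
        have b: "b \<le> k" "1 \<le> b" "shelf_of (c b) = s" using that IH[of s] by auto
        have "c b < c (Suc k) \<or> (c b = c (Suc k))"
          using shelf_same_even[of "c b" "c (Suc k)"] b s False by auto
        moreover have "b \<le> n" "Suc k \<le> n" using b Suc.prems by linarith+
        ultimately show ?thesis using False b(1) by (subst key_less) (auto simp del: One_nat_def)
      qed
      then show ?thesis using IH[of s] s pe set_Suc_shelf[of k c s] by (simp add: sorted_wrt_append)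
    qed
  qed
qed

lemma concat_inv:
  "sorted_wrt (\<lambda>a b. key n c a < key n c b) (concat (map (piles c n) [0..<k])) \<and>
   set (concat (map (piles c n) [0..<k])) = {j\<in>{1..n}. shelf_of (c j) < k}"
proof (induction k)
  case 0
  then show ?case by simp
next
  case (Suc k)
  have P: "set (piles c n k) = {j\<in>{1..n}. shelf_of (c j) = k}"
     "sorted_wrt (\<lambda>a b. key n c a < key n c b) (piles c n k)" using piles_inv[of n n c k] by auto
  have cross: "key n c a < key n c b" if "a \<in> set (concat (map (piles c n) [0..<k]))"
     "b \<in> set (piles c n k)" for a b
  proof -
    have "a \<le> n" "b \<le> n" "shelf_of (c a) < shelf_of (c b)" using that Suc.IH P by auto
    then show ?thesis by (subst key_less) (auto dest: shelf_less)
  qed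
  show ?case using Suc.IH P cross
    by (auto simp: sorted_wrt_append less_Suc_eq)
qed

lemma sorted_key_distinct: "sorted_wrt (\<lambda>a b. f a < (f b::nat)) xs \<Longrightarrow> distinct xs"
  by (induction xs) auto

lemma sorted_key_nth:
  "sorted_wrt (\<lambda>a b. f a < (f b::nat)) xs \<Longrightarrow> k < length xs \<Longrightarrow>
    card {j\<in>set xs. f j < f (xs ! k)} = k"
proof (induction xs arbitrary: k)
  case Nil
  then show ?case by simp
next
  case (Cons a xs)
  show ?case
  proof (cases k)
    case 0
    then have "{j\<in>set (a#xs). f j < f ((a#xs)!k)} = {}" using Cons.prems by auto
    then show ?thesis using 0 by simp
  next
    case (Suc k')
    then have i: "k' < length xs" using Cons.prems by auto
    have "f a < f (xs!k')" using Cons.prems i by auto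
    then have "{j\<in>set (a#xs). f j < f ((a#xs)!k)} = insert a {j\<in>set xs. f j < f (xs!k')}"
      using Suc by auto
    moreover have "a \<notin> set xs" using Cons.prems sorted_key_distinct by fastforce
    ultimately show ?thesis using Cons Suc i by simp
  qed
qed

lemma deck_props:
  assumes "c \<in> shelf_choices m n"
  shows "sorted_wrt (\<lambda>a b. key n c a < key n c b) (shelf_deck m n c) \<and> set (shelf_deck m n c) = {1..n}"
proof -
  have eq: "shelf_deck m n c = concat (map (piles c n) [0..<Suc m])"
    unfolding shelf_deck_def piles_def Let_def by (rule refl)
  have r: "shelf_of (c j) < Suc m" if "j \<in> {1..n}" for j
  proof -
    have "c j < 2*m+1" using assms that unfolding shelf_choices_def by auto
    then show ?thesis unfolding shelf_of_def by linarith
  qed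
  have se: "{j\<in>{1..n}. shelf_of (c j) < Suc m} = {1..n}"
  proof (intro equalityI subsetI)
    fix j assume "j \<in> {j\<in>{1..n}. shelf_of (c j) < Suc m}" then show "j\<in>{1..n}" by simp
  next
    fix j assume "j \<in> {1..n}" then show "j \<in> {j\<in>{1..n}. shelf_of (c j) < Suc m}" using r[of j] by simp
  qed
  have cc: "sorted_wrt (\<lambda>a b. key n c a < key n c b) (concat (map (piles c n) [0..<Suc m])) \<and>
   set (concat (map (piles c n) [0..<Suc m])) = {j\<in>{1..n}. shelf_of (c j) < Suc m}"
    by (rule concat_inv)
  show ?thesis using cc unfolding eq se .
qed

lemma coeff_lin_pow: "coeff ([:a, 1:] ^ k) d = (if d \<le> k then of_nat (k choose d) * a ^ (k - d) else (0::'a::comm_ring_1))"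
proof (cases "d \<le> k")
  case True
  then show ?thesis using coeff_linear_poly_power[OF True, of a 1] by simp
next
  case False
  then have "degree ([:a, 1:] ^ k) < d" by (simp add: degree_linear_power)
  then show ?thesis using False by (simp add: coeff_eq_0)
qed

lemma coeff_Y: "coeff ([:1,1:]^k) d = real (k choose d)"
  using coeff_lin_pow[of 1 k d] by (cases "d \<le> k") (auto simp: binomial_eq_0)

lemma delta_binom:
  assumes "s < n" "t < n"
  shows "(if s = t then 1 else 0 :: real) = (\<Sum>d<n. real (s choose d) * coeff ([:-1,1:]^d) t)"
proof -
  have "[:-1,1::real:] + 1 = [:0,1:]" by (simp add: one_pCons)
  then have "[:0,1::real:]^s = ([:-1,1:] + 1)^s" by simp
  also have "\<dots> = (\<Sum>d\<le>s. of_nat (s choose d) * [:-1,1:]^d * 1^(s-d))"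
    by (rule binomial_ring)
  finally have e: "coeff ([:0,1::real:]^s) t = (\<Sum>d\<le>s. real (s choose d) * coeff ([:-1,1:]^d) t)"
    by (simp add: coeff_sum of_nat_poly)
  have "[:0,1::real:] = monom 1 1" by (simp add: monom_Suc monom_0)
  then have "[:0,1::real:]^s = monom 1 s" by (simp add: monom_power)
  then have l: "coeff ([:0,1::real:]^s) t = (if s = t then 1 else 0)" by simp
  have "(\<Sum>d\<le>s. real (s choose d) * coeff ([:-1,1:]^d) t) = (\<Sum>d<n. real (s choose d) * coeff ([:-1,1:]^d) t)"
    by (rule sum.mono_neutral_left) (use assms in auto)
  then show ?thesis using e l by simp
qed

definition thr :: "nat \<Rightarrow> bool \<Rightarrow> nat" where "thr x lt = x + (if odd x = lt then 0 else 1)"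

definition Xc :: "nat \<Rightarrow> (nat \<Rightarrow> nat) \<Rightarrow> nat \<Rightarrow> nat" where
  "Xc n c i = card {j\<in>{1..n}-{i}. c j < thr (c i) (j < i)}"

lemma sum_fY:
  assumes "a \<le> N"
  shows "(\<Sum>y<N. if y < a then [:1,1:] else 1) = [:real N, real a:]"
proof -
  have "(\<Sum>y<N. if y < a then [:1,1:] else (1::real poly)) =
        (\<Sum>y\<in>{..<N} \<inter> {y. y < a}. [:1,1:]) + (\<Sum>y\<in>{..<N} \<inter> - {y. y < a}. 1)"
    by (rule sum.If_cases) simp
  also have "{..<N} \<inter> {y. y < a} = {..<a}" using assms by auto
  also have "{..<N} \<inter> - {y. y < a} = {a..<N}" by auto
  finally have "(\<Sum>y<N. if y < a then [:1,1:] else (1::real poly)) = of_nat a * [:1,1:] + of_nat (N - a)"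
    by simp
  also have "\<dots> = [:real N, real a:]" using assms by (simp add: of_nat_poly of_nat_diff)
  finally show ?thesis .
qed

lemma thr_le: "x < N \<Longrightarrow> thr x lt \<le> N"
  unfolding thr_def by auto

lemma Q_formula:
  assumes i: "i \<in> {1..n}"
  shows "(\<Sum>c\<in>PiE {1..n} (\<lambda>_. {..<N}). [:1,1:]^(Xc n c i)) =
    (\<Sum>x<N. [:real N, real (thr x True):]^(i-1) * [:real N, real (thr x False):]^(n-i))"
proof -
  define S where "S = {1..n}"
  define T where "T = S - {i}"
  define f where "f x j y = (if y < thr x (j<i) then [:1,1:] else (1::real poly))" for x j y
  define h where "h x j y = (if j = i then (if y = x then 1 else 0) else f x j y)" for x j y
  have finT: "finite T" unfolding T_def S_def by simp
  have pw: "[:1,1:]^(Xc n c i) = (\<Prod>j\<in>T. f (c i) j (c j))" for c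
  proof -
    have "(\<Prod>j\<in>T. f (c i) j (c j)) = (\<Prod>j\<in>{j\<in>T. c j < thr (c i) (j < i)}. [:1,1:])"
      unfolding f_def by (rule prod.inter_filter[OF finT, symmetric])
    then show ?thesis unfolding Xc_def T_def S_def by simp
  qed
  have split: "(\<Prod>j\<in>T. f (c i) j (c j)) = (\<Sum>x<N. \<Prod>j\<in>S. h x j (c j))"
    if c: "c \<in> PiE S (\<lambda>_. {..<N})" for c
  proof -
    have ci: "c i < N" using c i unfolding S_def by auto
    have "(\<Prod>j\<in>S. h x j (c j)) = (if c i = x then (\<Prod>j\<in>T. f x j (c j)) else 0)" for x
    proof -
      have "(\<Prod>j\<in>S. h x j (c j)) = h x i (c i) * (\<Prod>j\<in>T. h x j (c j))"
        unfolding T_def by (rule prod.remove) (use i in \<open>auto simp: S_def\<close>)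
      also have "(\<Prod>j\<in>T. h x j (c j)) = (\<Prod>j\<in>T. f x j (c j))"
        unfolding h_def T_def by (rule prod.cong) auto
      finally show ?thesis unfolding h_def by auto
    qed
    then have "(\<Sum>x<N. \<Prod>j\<in>S. h x j (c j)) = (\<Sum>x<N. if c i = x then (\<Prod>j\<in>T. f x j (c j)) else 0)"
      by simp
    also have "\<dots> = (\<Prod>j\<in>T. f (c i) j (c j))" using ci by simp
    finally show ?thesis by simp
  qed
  have "(\<Sum>c\<in>PiE S (\<lambda>_. {..<N}). [:1,1:]^(Xc n c i)) =
        (\<Sum>c\<in>PiE S (\<lambda>_. {..<N}). \<Sum>x<N. \<Prod>j\<in>S. h x j (c j))"
    using split pw by (intro sum.cong) auto
  also have "\<dots> = (\<Sum>x<N. \<Sum>c\<in>PiE S (\<lambda>_. {..<N}). \<Prod>j\<in>S. h x j (c j))"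
    by (rule sum.swap)
  also have "\<dots> = (\<Sum>x<N. \<Prod>j\<in>S. \<Sum>y<N. h x j y)"
    by (intro sum.cong refl prod_sum_PiE[symmetric]) (auto simp: S_def)
  also have "\<dots> = (\<Sum>x<N. [:real N, real (thr x True):]^(i-1) * [:real N, real (thr x False):]^(n-i))"
  proof (intro sum.cong refl)
    fix x assume x: "x \<in> {..<N}"
    have "(\<Prod>j\<in>S. \<Sum>y<N. h x j y) = (\<Sum>y<N. h x i y) * (\<Prod>j\<in>T. \<Sum>y<N. h x j y)"
      unfolding T_def by (rule prod.remove) (use i in \<open>auto simp: S_def\<close>)
    also have "(\<Sum>y<N. h x i y) = 1" using x unfolding h_def by simp
    also have "(\<Prod>j\<in>T. \<Sum>y<N. h x j y) = (\<Prod>j\<in>T. [:real N, real (thr x (j<i)):])"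
    proof (rule prod.cong[OF refl])
      fix j assume j: "j \<in> T"
      have "(\<Sum>y<N. h x j y) = (\<Sum>y<N. f x j y)" using j unfolding h_def T_def by simp
      also have "\<dots> = [:real N, real (thr x (j<i)):]"
        unfolding f_def by (rule sum_fY) (use x thr_le in auto)
      finally show "(\<Sum>y<N. h x j y) = [:real N, real (thr x (j<i)):]" .
    qed
    also have "T = {1..<i} \<union> {i<..n}" unfolding T_def S_def using i by auto
    also have "(\<Prod>j\<in>{1..<i} \<union> {i<..n}. [:real N, real (thr x (j<i)):]) =
       (\<Prod>j\<in>{1..<i}. [:real N, real (thr x (j<i)):]) * (\<Prod>j\<in>{i<..n}. [:real N, real (thr x (j<i)):])"
      by (rule prod.union_disjoint) auto
    also have "(\<Prod>j\<in>{1..<i}. [:real N, real (thr x (j<i)):]) = [:real N, real (thr x True):]^(i-1)"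
      by simp
    also have "(\<Prod>j\<in>{i<..n}. [:real N, real (thr x (j<i)):]) = [:real N, real (thr x False):]^(n-i)"
      by simp
    finally show "(\<Prod>j\<in>S. \<Sum>y<N. h x j y) =
       [:real N, real (thr x True):]^(i-1) * [:real N, real (thr x False):]^(n-i)" by simp
  qed
  finally show ?thesis unfolding S_def .
qed

lemma neg_pow_poly: "(- R::real poly)^k = smult ((-1)^k) (R^k)"
  by (induction k) (auto simp: mult_smult_left mult_smult_right)

lemma of_nat_poly_smult: "(of_nat k :: real poly) * p = smult (real k) p"
  by (simp add: of_nat_poly)

lemma C5:
  fixes P R :: "real poly"
  assumes d: "d < n"
  shows "(\<Sum>i\<in>{1..n}. smult (coeff ([:-1,1:]^d) (i-1)) (P^(i-1) * R^(n-i))) = R^(n-1-d) * (P - R)^d"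
proof -
  have "(\<Sum>i\<in>{1..n}. smult (coeff ([:-1,1:]^d) (i-1)) (P^(i-1) * R^(n-i))) =
        (\<Sum>t\<in>{0..n-1}. smult (coeff ([:-1,1:]^d) t) (P^t * R^(n-1-t)))"
  proof -
    have "{1..n} = {Suc 0..Suc (n-1)}" using d by auto
    then show ?thesis by (simp only: sum.shift_bounds_cl_Suc_ivl) simp
  qed
  also have "\<dots> = (\<Sum>t\<in>{..d}. smult (coeff ([:-1,1:]^d) t) (P^t * R^(n-1-t)))"
    by (rule sum.mono_neutral_right) (use d in \<open>auto simp: coeff_lin_pow\<close>)
  also have "\<dots> = (\<Sum>t\<le>d. R^(n-1-d) * (of_nat (d choose t) * P^t * (-R)^(d-t)))"
  proof (intro sum.cong refl)
    fix t assume t: "t \<in> {..d}"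
    have "R^(n-1-t) = R^(d-t) * R^(n-1-d)" using t d by (simp add: power_add[symmetric])
    then show "smult (coeff ([:-1,1:]^d) t) (P^t * R^(n-1-t)) = R^(n-1-d) * (of_nat (d choose t) * P^t * (-R)^(d-t))"
      using t by (simp add: coeff_lin_pow neg_pow_poly of_nat_poly_smult mult_smult_left mult_smult_right mult_ac)
  qed
  also have "\<dots> = R^(n-1-d) * (P + - R)^d"
    by (simp only: binomial_ring sum_distrib_left)
  finally show ?thesis by simp
qed

lemma C6:
  fixes a b N :: real
  shows "coeff (R^k * ([:N, a:] - [:N, b:])^d) d = coeff R 0 ^ k * (a - b)^d"
proof -
  have "[:N, a:] - [:N, b:] = monom (a - b) 1" by (simp add: monom_Suc monom_0)
  then have "([:N, a:] - [:N, b:])^d = monom ((a-b)^d) d" by (simp add: monom_power)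
  then show ?thesis by (simp add: mult.commute[of "R^k"] coeff_monom_mult coeff_0_power)
qed

lemma card_filter_sum: "finite A \<Longrightarrow> real (card {x\<in>A. P x}) = (\<Sum>x\<in>A. if P x then 1 else 0)"
  by (simp add: sum.inter_filter[symmetric])

lemma thr_diff: "real (thr x True) - real (thr x False) = (-1)^x"
  unfolding thr_def by auto

lemma main_count:
  assumes n: "n \<ge> 1"
  shows "(\<Sum>c\<in>PiE {1..n} (\<lambda>_. {..<N}). real (card {i\<in>{1..n}. Xc n c i = i - 1})) =
     (\<Sum>d<n. \<Sum>x<N. real N^(n-1-d) * ((-1::real)^x)^d)"
proof -
  define C where "C = PiE {1..n} (\<lambda>_. {..<N})"
  define S where "S = {1..n::nat}"
  define G where "G d t = coeff ([:-1,1::real:]^d) t" for d t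
  define P where "P x = [:real N, real (thr x True):]" for x
  define R where "R x = [:real N, real (thr x False):]" for x
  have finC: "finite C" unfolding C_def by (simp add: finite_PiE)
  have finS: "finite S" unfolding S_def by simp
  have Xlt: "Xc n c i < n" if "i \<in> S" for c i
  proof -
    have "Xc n c i \<le> card ({1..n} - {i})" unfolding Xc_def by (rule card_mono) auto
    also have "\<dots> = n - 1" using that unfolding S_def by simp
    finally show ?thesis using n by linarith
  qed
  have e1: "real (card {i\<in>S. Xc n c i = i - 1}) = (\<Sum>i\<in>S. \<Sum>d<n. real (Xc n c i choose d) * G d (i-1))" for c
  proof -
    have "real (card {i\<in>S. Xc n c i = i - 1}) = (\<Sum>i\<in>S. if Xc n c i = i - 1 then 1 else 0)"
      using finS by (rule card_filter_sum)
    also have "\<dots> = (\<Sum>i\<in>S. \<Sum>d<n. real (Xc n c i choose d) * G d (i-1))"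
    proof (rule sum.cong[OF refl])
      fix i assume i: "i \<in> S"
      have "i - 1 < n" using i unfolding S_def by auto
      then show "(if Xc n c i = i - 1 then 1 else 0) = (\<Sum>d<n. real (Xc n c i choose d) * G d (i-1))"
        unfolding G_def using delta_binom[OF Xlt[OF i]] by blast
    qed
    finally show ?thesis .
  qed
  have "(\<Sum>c\<in>C. real (card {i\<in>S. Xc n c i = i - 1})) =
        (\<Sum>c\<in>C. \<Sum>i\<in>S. \<Sum>d<n. real (Xc n c i choose d) * G d (i-1))"
    using e1 by simp
  also have "\<dots> = (\<Sum>i\<in>S. \<Sum>c\<in>C. \<Sum>d<n. real (Xc n c i choose d) * G d (i-1))"
    by (rule sum.swap)
  also have "\<dots> = (\<Sum>i\<in>S. \<Sum>d<n. \<Sum>c\<in>C. real (Xc n c i choose d) * G d (i-1))"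
    by (simp only: sum.swap[of _ C])
  also have "\<dots> = (\<Sum>d<n. \<Sum>i\<in>S. \<Sum>c\<in>C. real (Xc n c i choose d) * G d (i-1))"
    by (rule sum.swap)
  also have "\<dots> = (\<Sum>d<n. \<Sum>i\<in>S. G d (i-1) * coeff (\<Sum>c\<in>C. [:1,1:]^(Xc n c i)) d)"
    by (simp add: coeff_sum coeff_Y sum_distrib_left sum_distrib_right mult.commute)
  also have "\<dots> = (\<Sum>d<n. \<Sum>i\<in>S. G d (i-1) * coeff (\<Sum>x<N. P x^(i-1) * R x^(n-i)) d)"
    unfolding C_def P_def R_def by (intro sum.cong refl, subst Q_formula) (auto simp: S_def)
  also have "\<dots> = (\<Sum>d<n. \<Sum>x<N. coeff (\<Sum>i\<in>S. smult (G d (i-1)) (P x^(i-1) * R x^(n-i))) d)"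
    by (simp add: coeff_sum sum_distrib_left sum.swap[of _ S])
  also have "\<dots> = (\<Sum>d<n. \<Sum>x<N. coeff (R x^(n-1-d) * (P x - R x)^d) d)"
    unfolding G_def S_def by (intro sum.cong refl, subst C5) auto
  also have "\<dots> = (\<Sum>d<n. \<Sum>x<N. real N^(n-1-d) * ((-1::real)^x)^d)"
    unfolding P_def R_def C6 by (simp add: thr_diff)
  finally show ?thesis unfolding C_def S_def .
qed

lemma alt_sum: "(\<Sum>x<2*m+1. ((-1::real)^x)^d) = (if even d then real (2*m+1) else 1)"
proof (induction m)
  case 0
  then show ?case by simp
next
  case (Suc m)
  have "{..<2*Suc m+1} = insert (2*m+2) (insert (2*m+1) {..<2*m+1})" by auto
  then have "(\<Sum>x<2*Suc m+1. ((-1::real)^x)^d) = ((-1::real)^(2*m+2))^d + ((-1::real)^(2*m+1))^d + (\<Sum>x<2*m+1. ((-1::real)^x)^d)"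
    by simp
  also have "\<dots> = 1 + (-1)^d + (if even d then real (2*m+1) else 1)"
    using Suc by simp
  finally show ?case by auto
qed

lemma key_Xc:
  assumes "i \<in> {1..n}"
  shows "card {j\<in>{1..n}. key n c j < key n c i} = Xc n c i"
proof -
  have "{j\<in>{1..n}. key n c j < key n c i} = {j\<in>{1..n}-{i}. c j < thr (c i) (j < i)}"
  proof (intro set_eqI iffI)
    fix j assume j: "j \<in> {j\<in>{1..n}. key n c j < key n c i}"
    then have jn: "j \<le> n" "i \<le> n" "j \<in> {1..n}" using assms by auto
    have ji: "j \<noteq> i" using j by auto
    have "c j < c i \<or> (c j = c i \<and> (if odd (c i) then i < j else j < i))"
      using j jn key_less[of j n i c] by simp
    then have "c j < thr (c i) (j < i)" using ji unfolding thr_def by (auto split: if_splits)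
    then show "j \<in> {j\<in>{1..n}-{i}. c j < thr (c i) (j < i)}" using jn ji by simp
  next
    fix j assume j: "j \<in> {j\<in>{1..n}-{i}. c j < thr (c i) (j < i)}"
    then have jn: "j \<le> n" "i \<le> n" "j \<in> {1..n}" "j \<noteq> i" using assms by auto
    have "c j < thr (c i) (j < i)" using j by simp
    then have "c j < c i \<or> (c j = c i \<and> (if odd (c i) then i < j else j < i))"
      using jn(4) unfolding thr_def by (auto split: if_splits)
    then have "key n c j < key n c i" using jn key_less[of j n i c] by simp
    then show "j \<in> {j\<in>{1..n}. key n c j < key n c i}" using jn by simp
  qed
  then show ?thesis unfolding Xc_def by simp
qed

lemma deck_fix_iff:
  assumes c: "c \<in> shelf_choices m n" and i: "i \<in> {1..n}"
  shows "shelf_deck m n c ! (i - 1) = i \<longleftrightarrow> Xc n c i = i - 1"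
proof -
  define D where "D = shelf_deck m n c"
  have so: "sorted_wrt (\<lambda>a b. key n c a < key n c b) D" and st: "set D = {1..n}"
    using deck_props[OF c] unfolding D_def by auto
  have dist: "distinct D" using so by (rule sorted_key_distinct)
  have len: "length D = n" using distinct_card[OF dist] st by simp
  have kn: "card {j\<in>{1..n}. key n c j < key n c (D ! k)} = k" if "k < n" for k
    using sorted_key_nth[OF so, of k] that len st by simp
  show ?thesis
  proof
    assume "shelf_deck m n c ! (i - 1) = i"
    then have "D ! (i-1) = i" unfolding D_def .
    then have "card {j\<in>{1..n}. key n c j < key n c i} = i - 1" using kn[of "i-1"] i by auto
    then show "Xc n c i = i - 1" using key_Xc[OF i] by simp
  next
    assume X: "Xc n c i = i - 1"
    have "i \<in> set D" using st i by simp
    then obtain k where k: "k < n" "D ! k = i" using len by (auto simp: in_set_conv_nth)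
    have "k = i - 1" using kn[OF k(1)] k(2) key_Xc[OF i] X by simp
    then show "shelf_deck m n c ! (i - 1) = i" using k unfolding D_def by simp
  qed
qed

lemma unique_perm:
  assumes c: "c \<in> shelf_choices m n"
  shows "{\<pi>. \<pi> permutes {1..n} \<and> shelf_deck m n c = map \<pi> [1..<Suc n]} =
         {(\<lambda>i. if i \<in> {1..n} then shelf_deck m n c ! (i - 1) else i)}"
proof -
  define D where "D = shelf_deck m n c"
  define p where "p = (\<lambda>i. if i \<in> {1..n} then D ! (i - 1) else i)"
  have so: "sorted_wrt (\<lambda>a b. key n c a < key n c b) D" and st: "set D = {1..n}"
    using deck_props[OF c] unfolding D_def by auto
  have dist: "distinct D" using so by (rule sorted_key_distinct)
  have len: "length D = n" using distinct_card[OF dist] st by simp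
  have mp: "map p [1..<Suc n] = D"
    by (rule nth_equalityI) (auto simp: len p_def simp del: upt_Suc)
  have "bij_betw p {1..n} {1..n}"
  proof (rule bij_betw_imageI)
    show "inj_on p {1..n}"
    proof (rule inj_onI)
      fix x y assume xy: "x \<in> {1..n}" "y \<in> {1..n}" "p x = p y"
      then have "D ! (x-1) = D ! (y-1)" unfolding p_def by simp
      then have "x - 1 = y - 1" using dist xy len nth_eq_iff_index_eq[of D "x-1" "y-1"] by auto
      then show "x = y" using xy by auto
    qed
    show "p ` {1..n} = {1..n}"
    proof
      show "p ` {1..n} \<subseteq> {1..n}"
      proof
        fix y assume "y \<in> p ` {1..n}"
        then obtain x where x: "x \<in> {1..n}" "y = p x" by auto
        then have "D ! (x-1) \<in> set D" using len by auto
        then show "y \<in> {1..n}" using x st unfolding p_def by simp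
      qed
      show "{1..n} \<subseteq> p ` {1..n}"
      proof
        fix y assume "y \<in> {1..n}"
        then have "y \<in> set D" using st by simp
        then obtain k where k: "k < n" "D ! k = y" using len by (auto simp: in_set_conv_nth)
        then have "p (k+1) = y" unfolding p_def by simp
        moreover have "k + 1 \<in> {1..n}" using k by simp
        ultimately show "y \<in> p ` {1..n}" by (metis imageI)
      qed
    qed
  qed
  then have pp: "p permutes {1..n}" by (rule bij_imp_permutes) (auto simp: p_def)
  have "q = p" if q: "q permutes {1..n}" "D = map q [1..<Suc n]" for q
  proof
    fix x show "q x = p x"
    proof (cases "x \<in> {1..n}")
      case True
      then have "D ! (x - 1) = q x" using q(2) by (auto simp del: upt_Suc)
      then show ?thesis using True unfolding p_def by simp
    next
      case False
      then show ?thesis using permutes_not_in[OF q(1) False] unfolding p_def by auto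
    qed
  qed
  then have "{\<pi>. \<pi> permutes {1..n} \<and> D = map \<pi> [1..<Suc n]} = {p}"
    using pp mp by blast
  then show ?thesis unfolding D_def p_def .
qed

lemma sum_f_closed:
  fixes q :: real
  defines "f \<equiv> (\<lambda>d::nat. if even d then q^d else q^(d+1))"
  shows "(\<Sum>d<2*r+1. f d) = 1 + 2 * (\<Sum>k=1..r. q^(2*k)) \<and>
         (\<Sum>d<2*r+2. f d) = 1 + 2 * (\<Sum>k=1..r. q^(2*k)) + q^(2*r+2)"
proof (induction r)
  case 0
  then show ?case by (simp add: f_def power2_eq_square)
next
  case (Suc r)
  have a: "(\<Sum>d<2*Suc r+1. f d) = (\<Sum>d<2*r+2. f d) + f (2*r+2)"
    by (simp add: numeral_eq_Suc)
  have b: "(\<Sum>d<2*Suc r+2. f d) = (\<Sum>d<2*Suc r+1. f d) + f (2*r+3)"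
    by (simp add: numeral_eq_Suc)
  have fa: "f (2*r+2) = q^(2*r+2)" by (simp add: f_def)
  have fo: "f d = q^(d+1)" if "odd d" for d using that by (simp add: f_def)
  have fb': "f (2*r+3) = q^(2*r+3+1)" by (rule fo) simp
  have ee: "2*r+3+1 = 2*Suc r+2" by simp
  have fb: "f (2*r+3) = q^(2*Suc r+2)" using fb' unfolding ee .
  have s: "(\<Sum>k=1..Suc r. q^(2*k)) = (\<Sum>k=1..r. q^(2*k)) + q^(2*r+2)"
    by simp
  show ?case using Suc a b fa fb s by (simp add: algebra_simps)
qed

lemma final_arith:
  fixes N :: nat and n :: nat
  assumes N: "N > 0" and n: "n \<ge> 1"
  shows "(\<Sum>d<n. real N^(n-1-d) * (if even d then real N else 1)) / real N ^ n =
    (if odd n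
     then 1 + 2 * (\<Sum>k=1..(n-1) div 2. 1 / real N ^ (2*k))
     else 1 + 2 * (\<Sum>k=1..n div 2 - 1. 1 / real N ^ (2*k)) + 1 / real N ^ n)"
proof -
  define q where "q = 1 / real N"
  define f where "f = (\<lambda>d::nat. if even d then q^d else q^(d+1))"
  have "(\<Sum>d<n. real N^(n-1-d) * (if even d then real N else 1)) / real N ^ n = (\<Sum>d<n. f d)"
    unfolding sum_divide_distrib
  proof (intro sum.cong refl)
    fix d assume d: "d \<in> {..<n}"
    have nd: "n = (n-1-d) + (d+1)" using d by simp
    have e: "real N ^ n = real N^(n-1-d) * real N^(d+1)" by (subst nd) (rule power_add)
    have Np: "real N \<noteq> 0" using N by simp
    show "real N^(n-1-d) * (if even d then real N else 1) / real N ^ n = f d"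
      unfolding e f_def q_def using Np by (auto simp: power_divide field_simps)
  qed
  also have "\<dots> = (if odd n
     then 1 + 2 * (\<Sum>k=1..(n-1) div 2. q ^ (2*k))
     else 1 + 2 * (\<Sum>k=1..n div 2 - 1. q ^ (2*k)) + q ^ n)"
  proof (cases "odd n")
    case True
    then obtain r where r: "n = 2*r+1" by (metis oddE)
    then show ?thesis using sum_f_closed[of q r] unfolding f_def by simp
  next
    case False
    then obtain r where r: "n = 2*r+2" using n by (metis evenE One_nat_def Suc_le_eq add_2_eq_Suc' mult_0_right
         not0_implies_Suc mult_Suc_right add.commute neq0_conv)
    then show ?thesis using sum_f_closed[of q r] unfolding f_def by simp
  qed
  finally show ?thesis unfolding q_def by (simp add: power_one_over)
qed

theorem proposition5p2:
  fixes n m :: nat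
  assumes "n \<ge> 1" and "m \<ge> 1"
  shows "(\<Sum>\<pi> | \<pi> permutes {1..n}. lazy_shelf m n \<pi> * real (fixed_points n \<pi>)) =
    (if odd n
     then 1 + 2 * (\<Sum>k=1..(n-1) div 2. 1 / real (2*m+1) ^ (2*k))
     else 1 + 2 * (\<Sum>k=1..n div 2 - 1. 1 / real (2*m+1) ^ (2*k)) + 1 / real (2*m+1) ^ n)"
proof -
  define N where "N = 2*m+1"
  define C where "C = shelf_choices m n"
  define L where "L = [1..<Suc n]"
  define Perms where "Perms = {\<pi>. \<pi> permutes {1..n::nat}}"
  have finP: "finite Perms" unfolding Perms_def by (rule finite_permutations) simp
  have finC: "finite C" unfolding C_def shelf_choices_def by (simp add: finite_PiE)
  have "(\<Sum>\<pi> | \<pi> permutes {1..n}. lazy_shelf m n \<pi> * real (fixed_points n \<pi>)) =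
        (\<Sum>\<pi>\<in>Perms. \<Sum>c\<in>{c. c \<in> C \<and> shelf_deck m n c = map \<pi> L}. real (fixed_points n \<pi>)) / real N ^ n"
    unfolding Perms_def lazy_shelf_def sum_divide_distrib C_def L_def N_def
    by (intro sum.cong refl) simp
  also have "(\<Sum>\<pi>\<in>Perms. \<Sum>c\<in>{c. c \<in> C \<and> shelf_deck m n c = map \<pi> L}. real (fixed_points n \<pi>)) =
     (\<Sum>c\<in>C. \<Sum>\<pi>\<in>{\<pi>. \<pi> \<in> Perms \<and> shelf_deck m n c = map \<pi> L}. real (fixed_points n \<pi>))"
    by (rule sum.swap_restrict[OF finP finC])
  also have "\<dots> = (\<Sum>c\<in>C. real (card {i\<in>{1..n}. Xc n c i = i - 1}))"
  proof (intro sum.cong refl)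
    fix c assume c: "c \<in> C"
    have "{\<pi>. \<pi> \<in> Perms \<and> shelf_deck m n c = map \<pi> L} =
          {(\<lambda>i. if i \<in> {1..n} then shelf_deck m n c ! (i - 1) else i)}"
      using unique_perm[of c m n] c unfolding Perms_def L_def C_def by simp
    moreover have "fixed_points n (\<lambda>i. if i \<in> {1..n} then shelf_deck m n c ! (i - 1) else i) =
                   card {i\<in>{1..n}. Xc n c i = i - 1}"
      unfolding fixed_points_def
      by (rule arg_cong[where f=card]) (use deck_fix_iff[of c m n] c in \<open>auto simp: C_def\<close>)
    ultimately show "(\<Sum>\<pi>\<in>{\<pi>. \<pi> \<in> Perms \<and> shelf_deck m n c = map \<pi> L}. real (fixed_points n \<pi>)) =
       real (card {i\<in>{1..n}. Xc n c i = i - 1})" by simp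
  qed
  also have "\<dots> = (\<Sum>d<n. \<Sum>x<N. real N^(n-1-d) * ((-1::real)^x)^d)"
    unfolding C_def shelf_choices_def N_def using main_count[OF assms(1)] by simp
  also have "\<dots> = (\<Sum>d<n. real N^(n-1-d) * (if even d then real N else 1))"
  proof (intro sum.cong refl)
    fix d
    have altN: "(\<Sum>x<N. ((-1::real)^x)^d) = (if even d then real N else 1)"
      unfolding N_def by (rule alt_sum)
    show "(\<Sum>x<N. real N^(n-1-d) * ((-1::real)^x)^d) = real N^(n-1-d) * (if even d then real N else 1)"
      by (simp only: sum_distrib_left[symmetric] altN)
  qed
  finally show ?thesis using final_arith[of N n] assms unfolding N_def by simp
qed

end
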